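(* Let $(\mathcal{Z},d)$ be a metric space and $U:\mathcal{Z}^*\to[0,1]$ a potential that is $\beta(k)$-Lipschitz stable with respect to $d$ for a non-increasing $\beta:\mathbb{N}\to[0,1]$. Let $\mathcal{D}_s,\mathcal{D}_t$ be distributions on $\mathcal{Z}$. Then for all $m\in\mathbb{N}$ and all $z\in\mathcal{Z}$, $$\big|\nu(z;U,\mathcal{D}_s,m)-\nu(z;U,\mathcal{D}_t,m)\big|\le\frac{2}{m}\sum_{k=1}^{m-1}k\,\beta(k)\cdot W_1(\mathcal{D}_s,\mathcal{D}_t).$$
   Context: $\mathcal{Z}^*=\bigcup_{n\ge0}\mathcal{Z}^n$; a potential is a measurable, permutation-invariant $U:\mathcal{Z}^*\to[0,1]$; $S\cup\{z\}$ is the tuple $S$ with $z$ appended. $U$ is $\beta(k)$-Lipschitz stable w.r.t. $d$ if for all $k$, $S\in\mathcal{Z}^{k-1}$, $z,z'\in\mathcal{Z}$: $|U(S\cup\{z\})-U(S\cup\{z'\})|\le\beta(k)d(z,z')$. Wasserstein distance: $W_1(\mathcal{D}_s,\mathcal{D}_t)=\inf_{\gamma\in\Gamma_{st}}\mathbb{E}_{(s,t)\sim\gamma}[d(s,t)]$, where $\Gamma_{st}$ is the set of couplings (joint distributions on $\mathcal{Z}\times\mathcal{Z}$ with marginals $\mathcal{D}_s,\mathcal{D}_t$). Data Shapley value of entry $b_i$ in $B=(b_1,\dots,b_m)$: $\phi(b_i;U,B)=\frac1m\sum_{k=1}^m\binom{m-1}{k-1}^{-1}\sum_{I\subseteq[m]\setminus\{i\},|I|=k-1}(U(B_I\cup\{b_i\})-U(B_I))$.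 Distributional Shapley value: $\nu(z;U,\mathcal{D},m)=\mathbb{E}_{B\sim\mathcal{D}^{m-1}}[\phi(z;U,B\cup\{z\})]$ with $B$ i.i.d. from $\mathcal{D}$. *)

theory Defs
  imports "HOL-Probability.Probability"
begin

text \<open>Tuples in Z^* are lists; S \<union> {z} is S @ [z].\<close>

definition potential :: "('a::metric_space list \<Rightarrow> real) \<Rightarrow> bool" where
  "potential U \<longleftrightarrow>
     (\<forall>n. (\<lambda>x. U (map x [0..<n])) \<in> borel_measurable (PiM {..<n} (\<lambda>_. borel))) \<and>
     (\<forall>xs ys. mset xs = mset ys \<longrightarrow> U xs = U ys) \<and>
     (\<forall>xs. 0 \<le> U xs \<and> U xs \<le> 1)"

definition lipschitz_stable :: "('a::metric_space list \<Rightarrow> real) \<Rightarrow> (nat \<Rightarrow> real) \<Rightarrow> bool" where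
  "lipschitz_stable U \<beta> \<longleftrightarrow>
     (\<forall>k\<ge>1. \<forall>S z z'. length S = k - 1 \<longrightarrow>
        \<bar>U (S @ [z]) - U (S @ [z'])\<bar> \<le> \<beta> k * dist z z')"

definition couplings :: "'a::metric_space measure \<Rightarrow> 'a measure \<Rightarrow> ('a \<times> 'a) measure set" where
  "couplings Ds Dt = {\<gamma>. prob_space \<gamma> \<and> sets \<gamma> = sets (Ds \<Otimes>\<^sub>M Dt) \<and>
      distr \<gamma> Ds fst = Ds \<and> distr \<gamma> Dt snd = Dt}"

definition W1 :: "'a::metric_space measure \<Rightarrow> 'a measure \<Rightarrow> ennreal" where
  "W1 Ds Dt = (INF \<gamma>\<in>couplings Ds Dt. \<integral>\<^sup>+ p. ennreal (dist (fst p) (snd p)) \<partial>\<gamma>)"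

definition data_shapley :: "('a list \<Rightarrow> real) \<Rightarrow> 'a list \<Rightarrow> nat \<Rightarrow> real" where
  "data_shapley U B i = (let m = length B in
     (1 / real m) * (\<Sum>k=1..m. (1 / real ((m - 1) choose (k - 1))) *
        (\<Sum>I\<in>{I. I \<subseteq> {0..<m} - {i} \<and> card I = k - 1}.
            U (nths B I @ [B ! i]) - U (nths B I))))"

text \<open>Distributional Shapley value: B ~ D^(m-1) i.i.d., z appended as last entry.\<close>
definition dist_shapley :: "('a list \<Rightarrow> real) \<Rightarrow> 'a \<Rightarrow> 'a measure \<Rightarrow> nat \<Rightarrow> real" where
  "dist_shapley U z D m =
     (\<integral>x. data_shapley U (map x [0..<m - 1] @ [z]) (m - 1) \<partial>(PiM {..<m - 1} (\<lambda>_. D)))"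

end

theory Submission
  imports Defs
begin

lemma lip_list:
  fixes U :: "'a::metric_space list \<Rightarrow> real"
  assumes perm: "\<forall>xs ys. mset xs = mset ys \<longrightarrow> U xs = U ys"
    and lip: "lipschitz_stable U \<beta>"
  shows "\<bar>U (map a L @ ws) - U (map b L @ ws)\<bar> \<le> \<beta> (length L + length ws) * (\<Sum>i\<leftarrow>L. dist (a i) (b i))"
proof (induction L arbitrary: ws)
  case Nil then show ?case by simp
next
  case (Cons l L)
  let ?k = "length L + length ws + 1"
  have e1: "U (map a (l#L) @ ws) = U ((map a L @ ws) @ [a l])"
    using perm by (intro perm[rule_format]) simp
  have e2: "U (b l # map a L @ ws) = U ((map a L @ ws) @ [b l])"
    by (intro perm[rule_format]) simp
  have e3: "U (b l # map a L @ ws) = U (map a L @ (ws @ [b l]))"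
    using e2 by simp
  have e4: "U (map b (l#L) @ ws) = U (map b L @ (ws @ [b l]))"
    by (intro perm[rule_format]) simp
  have s1: "\<bar>U ((map a L @ ws) @ [a l]) - U ((map a L @ ws) @ [b l])\<bar> \<le> \<beta> ?k * dist (a l) (b l)"
    using lip unfolding lipschitz_stable_def
    apply (drule_tac x="?k" in spec)
    apply (drule mp, simp)
    apply (drule_tac x="map a L @ ws" in spec)
    by (simp add: add.commute)
  have s2: "\<bar>U (map a L @ (ws @ [b l])) - U (map b L @ (ws @ [b l]))\<bar> \<le> \<beta> ?k * (\<Sum>i\<leftarrow>L. dist (a i) (b i))"
    using Cons.IH[of "ws @ [b l]"] by simp
  have "\<bar>U (map a (l#L) @ ws) - U (map b (l#L) @ ws)\<bar> \<le> \<beta> ?k * dist (a l) (b l) + \<beta> ?k * (\<Sum>i\<leftarrow>L. dist (a i) (b i))"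
    using s1 s2 e1 e3 e4 e2 by linarith
  then show ?case by (simp add: algebra_simps)
qed

definition Sk :: "nat \<Rightarrow> nat \<Rightarrow> nat set set" where
  "Sk n k = {I. I \<subseteq> {0..<Suc n} - {n} \<and> card I = k - 1}"
definition LL :: "nat set \<Rightarrow> nat \<Rightarrow> nat list" where
  "LL I n = filter (\<lambda>i. i \<in> I) [0..<n]"

lemma nths_eq: "n \<notin> I \<Longrightarrow> nths (map w [0..<n] @ [z]) I = map w (LL I n)"
  by (simp add: nths_append nths_map nths_def zip_map1 zip_same_conv_map filter_map o_def LL_def)

lemma Sk_sub: "I \<in> Sk n k \<Longrightarrow> I \<subseteq> {0..<n}"
  by (auto simp: Sk_def less_Suc_eq)

lemma set_LL: "I \<subseteq> {0..<n} \<Longrightarrow> set (LL I n) = I"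
  by (auto simp: LL_def)

lemma length_LL: "I \<subseteq> {0..<n} \<Longrightarrow> length (LL I n) = card I"
  using distinct_card[of "LL I n"] set_LL[of I n] by (simp add: LL_def)

lemma ds_eq: "data_shapley U (map w [0..<n] @ [z]) n = 1/real (Suc n) * (\<Sum>k=1..Suc n. 1/real (n choose (k-1)) *
    (\<Sum>I\<in>Sk n k. U (map w (LL I n) @ [z]) - U (map w (LL I n))))"
proof -
  let ?B = "map w [0..<n] @ [z]"
  have len: "length ?B = Suc n" by simp
  have inner: "(\<Sum>I\<in>{I. I \<subseteq> {0..<Suc n} - {n} \<and> card I = k - 1}. U (nths ?B I @ [?B ! n]) - U (nths ?B I))
     = (\<Sum>I\<in>Sk n k. U (map w (LL I n) @ [z]) - U (map w (LL I n)))" for k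
    unfolding Sk_def apply (rule sum.cong, simp)
    apply (subgoal_tac "n \<notin> x")
     apply (simp add: nths_eq nth_append)
    by auto
  show ?thesis
    unfolding data_shapley_def Let_def len diff_Suc_1 inner ..
qed

lemma nested_bound:
  fixes f g :: "nat \<Rightarrow> nat set \<Rightarrow> real"
  assumes "c \<ge> 0" "\<forall>k\<in>K. ck k \<ge> 0" "\<forall>k\<in>K. \<forall>I\<in>J k. \<bar>f k I\<bar> \<le> g k I"
  shows "\<bar>c * (\<Sum>k\<in>K. ck k * (\<Sum>I\<in>J k. f k I))\<bar> \<le> c * (\<Sum>k\<in>K. ck k * (\<Sum>I\<in>J k. g k I))"
proof -
  have "\<bar>(\<Sum>k\<in>K. ck k * (\<Sum>I\<in>J k. f k I))\<bar> \<le> (\<Sum>k\<in>K. \<bar>ck k * (\<Sum>I\<in>J k. f k I)\<bar>)"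
    by (rule sum_abs)
  also have "\<dots> \<le> (\<Sum>k\<in>K. ck k * (\<Sum>I\<in>J k. g k I))"
  proof (rule sum_mono)
    fix k assume k: "k \<in> K"
    have "\<bar>(\<Sum>I\<in>J k. f k I)\<bar> \<le> (\<Sum>I\<in>J k. \<bar>f k I\<bar>)" by (rule sum_abs)
    also have "\<dots> \<le> (\<Sum>I\<in>J k. g k I)" using assms(3) k by (intro sum_mono) auto
    finally show "\<bar>ck k * (\<Sum>I\<in>J k. f k I)\<bar> \<le> ck k * (\<Sum>I\<in>J k. g k I)"
      using assms(2) k by (simp add: abs_mult mult_left_mono)
  qed
  finally show ?thesis using assms(1) by (simp add: abs_mult mult_left_mono)
qed

definition Lc :: "(nat \<Rightarrow> real) \<Rightarrow> nat \<Rightarrow> nat \<Rightarrow> real" where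
  "Lc \<beta> n j = 1/real (Suc n) * (\<Sum>k=1..Suc n. 1/real (n choose (k-1)) *
    (\<Sum>I\<in>Sk n k. (\<beta> k + \<beta> (k-1)) * (if j \<in> I then 1 else 0)))"

lemma F_lip:
  fixes U :: "'a::metric_space list \<Rightarrow> real"
  assumes perm: "\<forall>xs ys. mset xs = mset ys \<longrightarrow> U xs = U ys"
    and lip: "lipschitz_stable U \<beta>"
    and ab: "\<And>i. i \<noteq> j \<Longrightarrow> a i = b i"
  shows "\<bar>data_shapley U (map a [0..<n] @ [z]) n - data_shapley U (map b [0..<n] @ [z]) n\<bar>
     \<le> Lc \<beta> n j * dist (a j) (b j)"
proof -
  let ?D = "dist (a j) (b j)"
  have diff: "data_shapley U (map a [0..<n] @ [z]) n - data_shapley U (map b [0..<n] @ [z]) n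
     = 1/real (Suc n) * (\<Sum>k=1..Suc n. 1/real (n choose (k-1)) *
    (\<Sum>I\<in>Sk n k. (U (map a (LL I n) @ [z]) - U (map a (LL I n))) - (U (map b (LL I n) @ [z]) - U (map b (LL I n)))))"
    unfolding ds_eq by (simp add: sum_subtractf right_diff_distrib diff_divide_distrib)
  have pt: "\<bar>(U (map a (LL I n) @ [z]) - U (map a (LL I n))) - (U (map b (LL I n) @ [z]) - U (map b (LL I n)))\<bar>
      \<le> (\<beta> k + \<beta> (k-1)) * (if j \<in> I then 1 else 0) * ?D"
    if k: "k \<in> {1..Suc n}" and I: "I \<in> Sk n k" for k I
  proof -
    have sub: "I \<subseteq> {0..<n}" using Sk_sub[OF I] .
    have cI: "card I = k - 1" using I by (simp add: Sk_def)
    have len: "length (LL I n) = k - 1" using length_LL[OF sub] cI by simp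
    have S: "(\<Sum>i\<leftarrow>LL I n. dist (a i) (b i)) = (if j \<in> I then 1 else 0) * ?D"
    proof -
      have "(\<Sum>i\<leftarrow>LL I n. dist (a i) (b i)) = (\<Sum>i\<in>I. dist (a i) (b i))"
        using sum_list_distinct_conv_sum_set[of "LL I n"] set_LL[OF sub] by (simp add: LL_def)
      also have "\<dots> = (\<Sum>i\<in>I. if i = j then ?D else 0)"
        by (rule sum.cong) (auto simp: ab)
      also have "\<dots> = (if j \<in> I then 1 else 0) * ?D"
        using sub by (simp add: sum.delta' finite_subset)
      finally show ?thesis .
    qed
    have l1: "\<bar>U (map a (LL I n) @ [z]) - U (map b (LL I n) @ [z])\<bar> \<le> \<beta> k * ((if j \<in> I then 1 else 0) * ?D)"
      using lip_list[OF perm lip, of a "LL I n" "[z]" b] len S k by simp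
    have l2: "\<bar>U (map a (LL I n) @ []) - U (map b (LL I n) @ [])\<bar> \<le> \<beta> (k - 1) * ((if j \<in> I then 1 else 0) * ?D)"
      using lip_list[OF perm lip, of a "LL I n" "[]" b] len S by simp
    show ?thesis using l1 l2 by (simp add: algebra_simps abs_le_iff)
  qed
  have "\<bar>data_shapley U (map a [0..<n] @ [z]) n - data_shapley U (map b [0..<n] @ [z]) n\<bar>
    \<le> 1/real (Suc n) * (\<Sum>k=1..Suc n. 1/real (n choose (k-1)) *
    (\<Sum>I\<in>Sk n k. (\<beta> k + \<beta> (k-1)) * (if j \<in> I then 1 else 0) * ?D))"
    unfolding diff by (rule nested_bound) (use pt in auto)
  also have "\<dots> = Lc \<beta> n j * ?D"
    unfolding Lc_def by (simp only: sum_distrib_right mult.assoc)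
  finally show ?thesis .
qed


lemma card_Sk: "k \<ge> 1 \<Longrightarrow> card (Sk n k) = n choose (k - 1)"
proof -
  have "card ({0..<Suc n} - {n}) = n" by simp
  then show ?thesis unfolding Sk_def using n_subsets[of "{0..<Suc n} - {n}" "k - 1"] by simp
qed

lemma ind_sum: "I \<subseteq> {0..<(n::nat)} \<Longrightarrow> (\<Sum>j<n. (if j \<in> I then 1 else 0 :: real)) = real (card I)"
proof -
  assume I: "I \<subseteq> {0..<n}"
  have "(\<Sum>j<n. (if j \<in> I then 1 else 0 :: real)) = (\<Sum>j\<in>{j\<in>{..<n}. j \<in> I}. 1)"
    using sum.inter_filter[OF finite_lessThan[of n], of "\<lambda>_. 1::real" "\<lambda>j. j \<in> I"] by (simp del: sum.inter_filter)
  also have "{j\<in>{..<n}. j \<in> I} = I" using I by auto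
  finally show ?thesis by simp
qed

lemma sum_Lc: "(\<Sum>j<n. Lc \<beta> n j) = 1/real (Suc n) * (\<Sum>k=1..Suc n. (\<beta> k + \<beta> (k-1)) * real (k - 1))"
proof -
  have "(\<Sum>j<n. Lc \<beta> n j) = 1/real (Suc n) * (\<Sum>j<n. \<Sum>k=1..Suc n. 1/real (n choose (k-1)) *
    (\<Sum>I\<in>Sk n k. (\<beta> k + \<beta> (k-1)) * (if j \<in> I then 1 else 0)))"
    unfolding Lc_def by (simp add: sum_distrib_left)
  also have "\<dots> = 1/real (Suc n) * (\<Sum>k=1..Suc n. \<Sum>j<n. 1/real (n choose (k-1)) *
    (\<Sum>I\<in>Sk n k. (\<beta> k + \<beta> (k-1)) * (if j \<in> I then 1 else 0)))"
    by (subst sum.swap) simp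
  also have "\<dots> = 1/real (Suc n) * (\<Sum>k=1..Suc n. 1/real (n choose (k-1)) *
    (\<Sum>I\<in>Sk n k. \<Sum>j<n. (\<beta> k + \<beta> (k-1)) * (if j \<in> I then 1 else 0)))"
    by (simp add: sum_distrib_left sum.swap[of _ "{..<n}"])
  also have "\<dots> = 1/real (Suc n) * (\<Sum>k=1..Suc n. 1/real (n choose (k-1)) *
    (\<Sum>I\<in>Sk n k. (\<beta> k + \<beta> (k-1)) * real (k - 1)))"
  proof -
    have "(\<Sum>j<n. (\<beta> k + \<beta> (k-1)) * (if j \<in> I then 1 else 0)) = (\<beta> k + \<beta> (k-1)) * real (k - 1)"
      if "I \<in> Sk n k" for k I
      using ind_sum[OF Sk_sub[OF that]] that by (simp add: sum_distrib_left[symmetric] Sk_def)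
    then show ?thesis by (intro arg_cong[where f="\<lambda>x. _ * x"] sum.cong refl arg_cong[where f="\<lambda>x. _ * x"]) simp
  qed
  also have "\<dots> = 1/real (Suc n) * (\<Sum>k=1..Suc n. (\<beta> k + \<beta> (k-1)) * real (k - 1))"
  proof -
    have "1/real (n choose (k-1)) * (\<Sum>I\<in>Sk n k. (\<beta> k + \<beta> (k-1)) * real (k - 1)) = (\<beta> k + \<beta> (k-1)) * real (k - 1)"
      if "k \<in> {1..Suc n}" for k
    proof -
      have "(n choose (k-1)) > 0" using that by (auto simp add: zero_less_binomial_iff)
      then show ?thesis using card_Sk[of k n] that by simp
    qed
    then show ?thesis by (intro arg_cong[where f="\<lambda>x. _ * x"] sum.cong refl) simp
  qed
  finally show ?thesis .
qed

lemma beta_ineq: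
  assumes "antimono \<beta>"
  shows "(\<Sum>k=1..Suc n. (\<beta> k + \<beta> (k-1)) * real (k - 1)) \<le> 2 * (\<Sum>k=1..n. real k * \<beta> k)"
proof (induction n)
  case 0 then show ?case by simp
next
  case (Suc n)
  have "\<beta> (Suc (Suc n)) \<le> \<beta> (Suc n)" using assms by (simp add: antimono_def)
  then have "(\<beta> (Suc (Suc n)) + \<beta> (Suc n)) * real (Suc n) \<le> 2 * (real (Suc n) * \<beta> (Suc n))"
    using mult_right_mono[of "\<beta> (Suc (Suc n))" "\<beta> (Suc n)" "real (Suc n)"] by simp
  with Suc show ?case by (simp add: sum.cl_ivl_Suc algebra_simps)
qed


lemma meas_U:
  fixes U :: "'a::metric_space list \<Rightarrow> real"
  assumes pot: "potential U" and L: "set L \<subseteq> {..<n}"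
    and phi: "\<And>i. i < n \<Longrightarrow> (\<lambda>x. \<phi> x i) \<in> measurable M borel"
  shows "(\<lambda>x. U (map (\<phi> x) L @ ws)) \<in> borel_measurable M"
proof -
  let ?k = "length L + length ws"
  define \<psi> where "\<psi> = (\<lambda>x. \<lambda>t\<in>{..<?k}. (\<lambda>t x. if t < length L then \<phi> x (L!t) else ws!(t - length L)) t x)"
  have m1: "\<psi> \<in> measurable M (PiM {..<?k} (\<lambda>_. borel))"
    unfolding \<psi>_def
  proof (rule measurable_restrict)
    fix t assume "t \<in> {..<?k}"
    show "(\<lambda>x. if t < length L then \<phi> x (L!t) else ws!(t - length L)) \<in> measurable M borel"
    proof (cases "t < length L")
      case True
      then have "L!t < n" using L nth_mem by blast
      with True phi show ?thesis by simp
    next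
      case False then show ?thesis by simp
    qed
  qed
  have m2: "(\<lambda>y. U (map y [0..<?k])) \<in> borel_measurable (PiM {..<?k} (\<lambda>_. borel))"
    using pot unfolding potential_def by blast
  have eq: "map (\<psi> x) [0..<?k] = map (\<phi> x) L @ ws" for x
    by (rule nth_equalityI) (auto simp: \<psi>_def nth_append)
  show ?thesis using measurable_comp[OF m1 m2] by (simp add: o_def eq)
qed

lemma meas_F:
  fixes U :: "'a::metric_space list \<Rightarrow> real"
  assumes pot: "potential U"
    and phi: "\<And>i. i < n \<Longrightarrow> (\<lambda>x. \<phi> x i) \<in> measurable M borel"
  shows "(\<lambda>x. data_shapley U (map (\<phi> x) [0..<n] @ [z]) n) \<in> borel_measurable M"
  unfolding ds_eq
proof (intro borel_measurable_times borel_measurable_const borel_measurable_sum borel_measurable_diff)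
  fix k I assume I: "I \<in> Sk n k"
  have L: "set (LL I n) \<subseteq> {..<n}" using set_LL[OF Sk_sub[OF I]] Sk_sub[OF I] by auto
  show "(\<lambda>x. U (map (\<phi> x) (LL I n) @ [z])) \<in> borel_measurable M"
    by (rule meas_U[OF pot L phi])
  show "(\<lambda>x. U (map (\<phi> x) (LL I n))) \<in> borel_measurable M"
    using meas_U[OF pot L phi, where ws="[]"] by simp
qed

definition Bd :: "nat \<Rightarrow> real" where
  "Bd n = 1/real (Suc n) * (\<Sum>k=1..Suc n. 1/real (n choose (k-1)) * (\<Sum>I\<in>Sk n k. 1))"

lemma bound_F:
  fixes U :: "'a::metric_space list \<Rightarrow> real"
  assumes pot: "potential U"
  shows "\<bar>data_shapley U (map w [0..<n] @ [z]) n\<bar> \<le> Bd n"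
  unfolding ds_eq Bd_def
proof (rule nested_bound)
  have "0 \<le> U xs \<and> U xs \<le> 1" for xs using pot unfolding potential_def by blast
  then show "\<forall>k\<in>{1..Suc n}. \<forall>I\<in>Sk n k. \<bar>U (map w (LL I n) @ [z]) - U (map w (LL I n))\<bar> \<le> 1"
    by (simp add: abs_le_iff) (smt (verit))
qed auto


lemma Lc_nonneg: assumes "\<forall>k. 0 \<le> \<beta> k" shows "0 \<le> Lc \<beta> n j"
  unfolding Lc_def
  by (intro mult_nonneg_nonneg sum_nonneg divide_nonneg_nonneg add_nonneg_nonneg) (use assms in auto)

lemma inner_bound:
  fixes h :: "'b \<Rightarrow> real"
  assumes hm: "h \<in> borel_measurable M" and c: "0 \<le> c"
    and hb: "\<And>y. 0 \<le> h y \<and> h y \<le> c * D y"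
  shows "(\<integral>\<^sup>+ y. ennreal (h y) \<partial>M) \<le> ennreal c * (\<integral>\<^sup>+ y. ennreal (D y) \<partial>M)"
proof (cases "c = 0")
  case True
  then have "ennreal (h y) = 0" for y using hb[of y] by simp
  then show ?thesis by simp
next
  case False
  then have cp: "c > 0" using c by simp
  have "(\<integral>\<^sup>+ y. ennreal (h y) \<partial>M) = (\<integral>\<^sup>+ y. ennreal c * ennreal (h y / c) \<partial>M)"
    using cp hb by (intro nn_integral_cong) (simp add: ennreal_mult[symmetric])
  also have "\<dots> = ennreal c * (\<integral>\<^sup>+ y. ennreal (h y / c) \<partial>M)"
    using hm by (intro nn_integral_cmult measurable_compose[OF _ measurable_ennreal] borel_measurable_divide borel_measurable_const)
  also have "\<dots> \<le> ennreal c * (\<integral>\<^sup>+ y. ennreal (D y) \<partial>M)"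
  proof (intro mult_left_mono nn_integral_mono ennreal_leI)
    fix y show "h y / c \<le> D y" using hb[of y] cp by (simp add: divide_le_eq mult.commute)
  qed simp
  finally show ?thesis .
qed


lemma per_coupling:
  fixes U :: "'a::metric_space list \<Rightarrow> real"
  assumes pot: "potential U" and lip: "lipschitz_stable U \<beta>" and bnn: "\<forall>k. 0 \<le> \<beta> k"
    and Ds: "prob_space Ds" "sets Ds = sets borel"
    and Dt: "prob_space Dt" "sets Dt = sets borel"
    and g: "\<gamma> \<in> couplings Ds Dt"
  shows "ennreal \<bar>dist_shapley U z Ds m - dist_shapley U z Dt m\<bar>
     \<le> ennreal (\<Sum>j<m-1. Lc \<beta> (m-1) j) * (\<integral>\<^sup>+ p. ennreal (dist (fst p) (snd p)) \<partial>\<gamma>)"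
proof -
  define n where "n = m - 1"
  let ?W = "\<integral>\<^sup>+ p. ennreal (dist (fst p) (snd p)) \<partial>\<gamma>"
  have perm: "\<forall>xs ys. mset xs = mset ys \<longrightarrow> U xs = U ys" using pot unfolding potential_def by blast
  have gp: "prob_space \<gamma>" and gs: "sets \<gamma> = sets (Ds \<Otimes>\<^sub>M Dt)"
    and gf: "distr \<gamma> Ds fst = Ds" and gsn: "distr \<gamma> Dt snd = Dt"
    using g unfolding couplings_def by auto
  have fstD: "fst \<in> measurable \<gamma> Ds"
    using measurable_cong_sets[OF gs refl, of Ds] measurable_fst by blast
  have sndD: "snd \<in> measurable \<gamma> Dt"
    using measurable_cong_sets[OF gs refl, of Dt] measurable_snd by blast
  have fstb: "fst \<in> measurable \<gamma> borel"
    using fstD measurable_cong_sets[OF refl Ds(2), of \<gamma>] by blast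
  have sndb: "snd \<in> measurable \<gamma> borel"
    using sndD measurable_cong_sets[OF refl Dt(2), of \<gamma>] by blast
  interpret G: product_prob_space "\<lambda>_. \<gamma>" by (rule product_prob_spaceI) (rule gp)
  define P where "P = PiM {..<n} (\<lambda>_. \<gamma>)"
  interpret P: prob_space P unfolding P_def by (rule prob_space_PiM) (rule gp)
  define H where "H j x = data_shapley U (map (\<lambda>i. if i < j then fst (x i) else snd (x i)) [0..<n] @ [z]) n" for j x
  have Hm: "H j \<in> borel_measurable P" for j
    unfolding H_def
  proof (rule meas_F[OF pot])
    fix i assume "i < n"
    then have ci: "(\<lambda>x. x i) \<in> measurable P \<gamma>" unfolding P_def by (intro measurable_component_singleton) simp
    show "(\<lambda>x. if i < j then fst (x i) else snd (x i)) \<in> measurable P borel"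
      by (cases "i < j") (simp_all add: measurable_compose[OF ci fstb] measurable_compose[OF ci sndb])
  qed
  have Hi: "integrable P (H j)" for j
    by (rule P.integrable_const_bound[where B="Bd n"]) (auto simp: H_def bound_F[OF pot] Hm)
  have Ps: "dist_shapley U z Ds m = (\<integral>x. H n x \<partial>P)"
  proof -
    interpret PDs: product_prob_space "\<lambda>_. Ds" by (rule product_prob_spaceI) (rule Ds(1))
    have d: "distr P (PiM {..<n} (\<lambda>_. Ds)) (compose {..<n} fst) = PiM {..<n} (\<lambda>_. Ds)"
    proof -
      have "distr (PiM {..<n} (\<lambda>_. \<gamma>)) (PiM {..<n} (\<lambda>_. Ds)) (compose {..<n} fst) = PiM {..<n} (\<lambda>i. distr \<gamma> Ds fst)"
        by (rule distr_PiM_finite_prob_space) (auto intro: product_prob_spaceI gp Ds(1) fstD)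
      then show ?thesis by (simp add: gf P_def)
    qed
    have Fm: "(\<lambda>x. data_shapley U (map x [0..<n] @ [z]) n) \<in> borel_measurable (PiM {..<n} (\<lambda>_. Ds))"
    proof (rule meas_F[OF pot])
      fix i assume "i < n"
      then have "(\<lambda>x. x i) \<in> measurable (PiM {..<n} (\<lambda>_. Ds)) Ds" by (intro measurable_component_singleton) simp
      then show "(\<lambda>x. x i) \<in> measurable (PiM {..<n} (\<lambda>_. Ds)) borel"
        using measurable_cong_sets[OF refl Ds(2)] by blast
    qed
    have cm: "compose {..<n} fst \<in> measurable P (PiM {..<n} (\<lambda>_. Ds))"
      unfolding compose_def P_def
      by (intro measurable_restrict measurable_compose[OF measurable_component_singleton[where M="\<lambda>_. \<gamma>"] fstD]) auto
    have "dist_shapley U z Ds m = (\<integral>x. data_shapley U (map x [0..<n] @ [z]) n \<partial>(PiM {..<n} (\<lambda>_. Ds)))"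
      unfolding dist_shapley_def n_def ..
    also have "\<dots> = (\<integral>x. data_shapley U (map (compose {..<n} fst x) [0..<n] @ [z]) n \<partial>P)"
      by (subst d[symmetric], rule integral_distr[OF cm]) (simp add: d Fm)
    also have "\<dots> = (\<integral>x. H n x \<partial>P)"
      unfolding H_def compose_def by (intro Bochner_Integration.integral_cong refl arg_cong[where f="\<lambda>w. data_shapley U (w @ [z]) n"]) auto
    finally show ?thesis .
  qed
  have Pt: "dist_shapley U z Dt m = (\<integral>x. H 0 x \<partial>P)"
  proof -
    interpret PDt: product_prob_space "\<lambda>_. Dt" by (rule product_prob_spaceI) (rule Dt(1))
    have d: "distr P (PiM {..<n} (\<lambda>_. Dt)) (compose {..<n} snd) = PiM {..<n} (\<lambda>_. Dt)"
    proof -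
      have "distr (PiM {..<n} (\<lambda>_. \<gamma>)) (PiM {..<n} (\<lambda>_. Dt)) (compose {..<n} snd) = PiM {..<n} (\<lambda>i. distr \<gamma> Dt snd)"
        by (rule distr_PiM_finite_prob_space) (auto intro: product_prob_spaceI gp Dt(1) sndD)
      then show ?thesis by (simp add: gsn P_def)
    qed
    have Fm: "(\<lambda>x. data_shapley U (map x [0..<n] @ [z]) n) \<in> borel_measurable (PiM {..<n} (\<lambda>_. Dt))"
    proof (rule meas_F[OF pot])
      fix i assume "i < n"
      then have "(\<lambda>x. x i) \<in> measurable (PiM {..<n} (\<lambda>_. Dt)) Dt" by (intro measurable_component_singleton) simp
      then show "(\<lambda>x. x i) \<in> measurable (PiM {..<n} (\<lambda>_. Dt)) borel"
        using measurable_cong_sets[OF refl Dt(2)] by blast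
    qed
    have cm: "compose {..<n} snd \<in> measurable P (PiM {..<n} (\<lambda>_. Dt))"
      unfolding compose_def P_def
      by (intro measurable_restrict measurable_compose[OF measurable_component_singleton[where M="\<lambda>_. \<gamma>"] sndD]) auto
    have "dist_shapley U z Dt m = (\<integral>x. data_shapley U (map x [0..<n] @ [z]) n \<partial>(PiM {..<n} (\<lambda>_. Dt)))"
      unfolding dist_shapley_def n_def ..
    also have "\<dots> = (\<integral>x. data_shapley U (map (compose {..<n} snd x) [0..<n] @ [z]) n \<partial>P)"
      by (subst d[symmetric], rule integral_distr[OF cm]) (simp add: d Fm)
    also have "\<dots> = (\<integral>x. H 0 x \<partial>P)"
      unfolding H_def compose_def by (intro Bochner_Integration.integral_cong refl arg_cong[where f="\<lambda>w. data_shapley U (w @ [z]) n"]) auto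
    finally show ?thesis .
  qed
  have step: "ennreal \<bar>(\<integral>x. H (Suc j) x \<partial>P) - (\<integral>x. H j x \<partial>P)\<bar> \<le> ennreal (Lc \<beta> n j) * ?W"
    if j: "j < n" for j
  proof -
    define J where "J = {..<n} - {j}"
    have J: "finite J" "j \<notin> J" "insert j J = {..<n}" using j by (auto simp: J_def)
    let ?D = "\<lambda>x. \<bar>H (Suc j) x - H j x\<bar>"
    have "\<bar>(\<integral>x. H (Suc j) x \<partial>P) - (\<integral>x. H j x \<partial>P)\<bar> = \<bar>\<integral>x. H (Suc j) x - H j x \<partial>P\<bar>"
      by (simp add: Hi)
    also have "\<dots> \<le> (\<integral>x. ?D x \<partial>P)" by (rule integral_abs_bound)
    finally have "ennreal \<bar>(\<integral>x. H (Suc j) x \<partial>P) - (\<integral>x. H j x \<partial>P)\<bar> \<le> ennreal (\<integral>x. ?D x \<partial>P)"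
      by (rule ennreal_leI)
    also have "ennreal (\<integral>x. ?D x \<partial>P) = (\<integral>\<^sup>+ x. ennreal (?D x) \<partial>P)"
      by (rule nn_integral_eq_integral[symmetric]) (auto simp: Hi)
    also have "\<dots> = (\<integral>\<^sup>+ x. (\<integral>\<^sup>+ y. ennreal (?D (x(j := y))) \<partial>\<gamma>) \<partial>(PiM J (\<lambda>_. \<gamma>)))"
      unfolding P_def J(3)[symmetric]
      apply (rule G.product_nn_integral_insert[OF J(1,2)])
      unfolding J(3)
      by (intro measurable_compose[OF _ measurable_ennreal] borel_measurable_abs borel_measurable_diff Hm[unfolded P_def])
    also have "\<dots> \<le> (\<integral>\<^sup>+ x. ennreal (Lc \<beta> n j) * ?W \<partial>(PiM J (\<lambda>_. \<gamma>)))"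
    proof (rule nn_integral_mono)
      fix x :: "nat \<Rightarrow> 'a \<times> 'a"
      let ?a = "\<lambda>y i. if i < Suc j then fst ((x(j := y)) i) else snd ((x(j := y)) i)"
      let ?b = "\<lambda>y i. if i < j then fst ((x(j := y)) i) else snd ((x(j := y)) i)"
      have meas: "(\<lambda>y. ?D (x(j := y))) \<in> borel_measurable \<gamma>"
      proof -
        have ma: "(\<lambda>y. data_shapley U (map (?a y) [0..<n] @ [z]) n) \<in> borel_measurable \<gamma>"
        proof (rule meas_F[OF pot])
          fix i show "(\<lambda>y. ?a y i) \<in> measurable \<gamma> borel"
          proof (cases "i = j")
            case False
            then have "(\<lambda>y. ?a y i) = (\<lambda>y. if i < Suc j then fst (x i) else snd (x i))" by (intro ext) simp
            then show ?thesis by simp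
          qed (auto simp: fstb sndb)
        qed
        have mb: "(\<lambda>y. data_shapley U (map (?b y) [0..<n] @ [z]) n) \<in> borel_measurable \<gamma>"
        proof (rule meas_F[OF pot])
          fix i show "(\<lambda>y. ?b y i) \<in> measurable \<gamma> borel"
          proof (cases "i = j")
            case False
            then have "(\<lambda>y. ?b y i) = (\<lambda>y. if i < j then fst (x i) else snd (x i))" by (intro ext) simp
            then show ?thesis by simp
          qed (auto simp: fstb sndb)
        qed
        show ?thesis unfolding H_def using ma mb by measurable
      qed
      have "(\<integral>\<^sup>+ y. ennreal (?D (x(j := y))) \<partial>\<gamma>) \<le> ennreal (Lc \<beta> n j) * ?W"
      proof (rule inner_bound[OF meas Lc_nonneg[OF bnn]])
        fix y
        have "?D (x(j := y)) \<le> Lc \<beta> n j * dist (?a y j) (?b y j)"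
          unfolding H_def by (rule F_lip[OF perm lip]) auto
        then show "0 \<le> ?D (x(j := y)) \<and> ?D (x(j := y)) \<le> Lc \<beta> n j * dist (fst y) (snd y)" by simp
      qed
      then show "(\<integral>\<^sup>+ y. ennreal (?D (x(j := y))) \<partial>\<gamma>) \<le> ennreal (Lc \<beta> n j) * ?W" .
    qed
    also have "\<dots> = ennreal (Lc \<beta> n j) * ?W"
    proof -
      interpret PJ: prob_space "PiM J (\<lambda>_. \<gamma>)" by (rule prob_space_PiM) (rule gp)
      show ?thesis by (simp add: PJ.emeasure_space_1)
    qed
    finally show ?thesis .
  qed
  have "\<bar>dist_shapley U z Ds m - dist_shapley U z Dt m\<bar> = \<bar>\<Sum>j<n. (\<integral>x. H (Suc j) x \<partial>P) - (\<integral>x. H j x \<partial>P)\<bar>"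
    unfolding Ps Pt by (subst sum_lessThan_telescope) rule
  also have "\<dots> \<le> (\<Sum>j<n. \<bar>(\<integral>x. H (Suc j) x \<partial>P) - (\<integral>x. H j x \<partial>P)\<bar>)" by (rule sum_abs)
  finally have "ennreal \<bar>dist_shapley U z Ds m - dist_shapley U z Dt m\<bar>
     \<le> ennreal (\<Sum>j<n. \<bar>(\<integral>x. H (Suc j) x \<partial>P) - (\<integral>x. H j x \<partial>P)\<bar>)" by (rule ennreal_leI)
  also have "\<dots> = (\<Sum>j<n. ennreal \<bar>(\<integral>x. H (Suc j) x \<partial>P) - (\<integral>x. H j x \<partial>P)\<bar>)"
    by simp
  also have "\<dots> \<le> (\<Sum>j<n. ennreal (Lc \<beta> n j) * ?W)" by (rule sum_mono) (simp add: step)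
  also have "\<dots> = ennreal (\<Sum>j<n. Lc \<beta> n j) * ?W"
    by (simp add: sum_distrib_right[symmetric] Lc_nonneg[OF bnn])
  finally show ?thesis unfolding n_def .
qed


lemma coupling_ne:
  assumes Ds: "prob_space Ds" and Dt: "prob_space Dt"
  shows "Ds \<Otimes>\<^sub>M Dt \<in> couplings Ds Dt"
proof -
  interpret PP: pair_prob_space Ds Dt
    by (simp add: pair_prob_space_def pair_sigma_finite_def Ds Dt prob_space_imp_sigma_finite)
  have f: "distr (Ds \<Otimes>\<^sub>M Dt) Ds fst = Ds" by (rule prob_space.distr_pair_fst[OF Dt])
  have s: "distr (Ds \<Otimes>\<^sub>M Dt) Dt snd = Dt"
  proof (intro measure_eqI)
    fix A assume A: "A \<in> sets (distr (Ds \<Otimes>\<^sub>M Dt) Dt snd)"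
    from A have "emeasure (distr (Ds \<Otimes>\<^sub>M Dt) Dt snd) A = emeasure (Ds \<Otimes>\<^sub>M Dt) (space Ds \<times> A)"
      by (auto simp add: emeasure_distr space_pair_measure dest: sets.sets_into_space intro!: arg_cong2[where f=emeasure])
    with A show "emeasure (distr (Ds \<Otimes>\<^sub>M Dt) Dt snd) A = emeasure Dt A"
      using sigma_finite_measure.emeasure_pair_measure_Times[OF prob_space_imp_sigma_finite[OF Dt], where A="space Ds" and N=Ds and B=A] PP.M1.emeasure_space_1 by simp
  qed simp
  show ?thesis unfolding couplings_def using f s PP.P.prob_space_axioms by auto
qed

theorem theorem2p8:
  fixes U :: "'a::metric_space list \<Rightarrow> real"
    and \<beta> :: "nat \<Rightarrow> real"
    and Ds Dt :: "'a measure"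
  assumes "potential U"
    and "lipschitz_stable U \<beta>"
    and "antimono \<beta>"
    and "\<forall>k. 0 \<le> \<beta> k \<and> \<beta> k \<le> 1"
    and "prob_space Ds" and "sets Ds = sets borel"
    and "prob_space Dt" and "sets Dt = sets borel"
  shows "\<forall>m z. ennreal \<bar>dist_shapley U z Ds m - dist_shapley U z Dt m\<bar>
           \<le> ennreal (2 / real m * (\<Sum>k=1..m-1. real k * \<beta> k)) * W1 Ds Dt"
proof (intro allI)
  fix m z
  let ?x = "ennreal \<bar>dist_shapley U z Ds m - dist_shapley U z Dt m\<bar>"
  define c where "c = 2 / real m * (\<Sum>k=1..m-1. real k * \<beta> k)"
  have bnn: "\<forall>k. 0 \<le> \<beta> k" using assms(4) by blast
  have c0: "0 \<le> c" unfolding c_def by (intro mult_nonneg_nonneg divide_nonneg_nonneg sum_nonneg) (use bnn in auto)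
  have Lsum: "(\<Sum>j<m-1. Lc \<beta> (m-1) j) \<le> c"
  proof (cases m)
    case 0 then show ?thesis using c0 by simp
  next
    case (Suc n)
    have "(\<Sum>j<m-1. Lc \<beta> (m-1) j) = 1/real (Suc n) * (\<Sum>k=1..Suc n. (\<beta> k + \<beta> (k-1)) * real (k - 1))"
      using Suc sum_Lc by simp
    also have "\<dots> \<le> 1/real (Suc n) * (2 * (\<Sum>k=1..n. real k * \<beta> k))"
      by (intro mult_left_mono beta_ineq[OF assms(3)]) simp
    also have "\<dots> = c" unfolding c_def Suc by simp
    finally show ?thesis .
  qed
  have each: "?x \<le> ennreal c * (\<integral>\<^sup>+ p. ennreal (dist (fst p) (snd p)) \<partial>\<gamma>)"
    if g: "\<gamma> \<in> couplings Ds Dt" for \<gamma>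
  proof -
    have "?x \<le> ennreal (\<Sum>j<m-1. Lc \<beta> (m-1) j) * (\<integral>\<^sup>+ p. ennreal (dist (fst p) (snd p)) \<partial>\<gamma>)"
      by (rule per_coupling[OF assms(1,2) bnn assms(5,6,7,8) g])
    also have "\<dots> \<le> ennreal c * (\<integral>\<^sup>+ p. ennreal (dist (fst p) (snd p)) \<partial>\<gamma>)"
      by (intro mult_right_mono ennreal_leI Lsum) simp
    finally show ?thesis .
  qed
  show "?x \<le> ennreal c * W1 Ds Dt"
  proof (cases "c = 0")
    case True
    have "?x \<le> 0" using each[OF coupling_ne[OF assms(5,7)]] True by simp
    then show ?thesis by simp
  next
    case False
    then have cp: "c > 0" using c0 by simp
    have "ennreal (1/c) * ?x \<le> W1 Ds Dt"
      unfolding W1_def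
    proof (rule INF_greatest)
      fix \<gamma> assume g: "\<gamma> \<in> couplings Ds Dt"
      have "ennreal (1/c) * ?x \<le> ennreal (1/c) * (ennreal c * (\<integral>\<^sup>+ p. ennreal (dist (fst p) (snd p)) \<partial>\<gamma>))"
        by (intro mult_left_mono each[OF g]) simp
      also have "\<dots> = (\<integral>\<^sup>+ p. ennreal (dist (fst p) (snd p)) \<partial>\<gamma>)"
        using cp by (simp add: mult.assoc[symmetric] ennreal_mult[symmetric])
      finally show "ennreal (1/c) * ?x \<le> (\<integral>\<^sup>+ p. ennreal (dist (fst p) (snd p)) \<partial>\<gamma>)" .
    qed
    then have "ennreal c * (ennreal (1/c) * ?x) \<le> ennreal c * W1 Ds Dt"
      by (rule mult_left_mono) simp
    moreover have "ennreal c * (ennreal (1/c) * ?x) = ?x"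
      using cp by (simp add: mult.assoc[symmetric] ennreal_mult[symmetric])
    ultimately show ?thesis by simp
  qed
qed

end
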